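(* Let $x_1<x_2$, $u_0\in C^4([x_1,x_2])$ and $u_1\in C^3([x_1,x_2])$. Consider the system for $(R,S,W)(x,t)$: \[ \begin{cases} R_t+2t^2R_x=\dfrac{R-S}{2t}-2t^2\big(u_1'(x)+u_0''(x)t\big),\\[4pt] S_t-2t^2S_x=\dfrac{S-R}{2t}+2t^2\big(u_1'(x)-u_0''(x)t\big),\\[4pt] W_t-2t^2W_x=-2t\big(R+u_1(x)\big), \end{cases} \] with boundary conditions $(R,S,W)(x,0)=(0,0,0)$ and $(R_t,S_t,W_t)(x,0)=(0,0,0)$ for $x\in[x_1,x_2]$. Then there exists a constant $\tilde\delta$ with $0<\tilde\delta\le\sqrt[3]{\frac{3(x_2-x_1)}{4}}$ such that this boundary problem has a classical solution in the region \[ \widetilde D_{\tilde\delta}=\Big\{(x,t):\ 0\le t\le\tilde\delta,\ x_1+\tfrac23t^3\le x\le x_2-\tfrac23t^3\Big\}. \] *)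

theory Defs
  imports "HOL-Analysis.Analysis"
begin

text \<open>u is of class C^k on the closed interval [a,b], and D j is its j-th derivative
  (one-sided at the endpoints), D 0 = u.\<close>
definition Ck_on_interval :: "nat \<Rightarrow> real \<Rightarrow> real \<Rightarrow> (nat \<Rightarrow> real \<Rightarrow> real) \<Rightarrow> bool" where
  "Ck_on_interval k a b D \<longleftrightarrow>
     (\<forall>j<k. \<forall>x\<in>{a..b}. (D j has_real_derivative D (Suc j) x) (at x within {a..b})) \<and>
     (\<forall>j\<le>k. continuous_on {a..b} (D j))"

definition C1_on_region :: "(real \<times> real) set \<Rightarrow> (real \<Rightarrow> real \<Rightarrow> real)
     \<Rightarrow> (real \<Rightarrow> real \<Rightarrow> real) \<Rightarrow> (real \<Rightarrow> real \<Rightarrow> real) \<Rightarrow> bool" where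
  "C1_on_region Dom F Fx Ft \<longleftrightarrow>
     (\<forall>(x,t)\<in>Dom. ((\<lambda>p. F (fst p) (snd p)) has_derivative
                      (\<lambda>h. Fx x t * fst h + Ft x t * snd h)) (at (x,t) within Dom)) \<and>
     continuous_on Dom (\<lambda>p. Fx (fst p) (snd p)) \<and>
     continuous_on Dom (\<lambda>p. Ft (fst p) (snd p))"

definition region_D :: "real \<Rightarrow> real \<Rightarrow> real \<Rightarrow> (real \<times> real) set" where
  "region_D x1 x2 \<delta> = {(x,t). 0 \<le> t \<and> t \<le> \<delta> \<and> x1 + 2/3 * t^3 \<le> x \<and> x \<le> x2 - 2/3 * t^3}"

end

theory Submission
  imports Defs
begin



definition tau :: "real \<Rightarrow> real" where "tau t = 2/3 * t^3"

definition Kf :: "real \<Rightarrow> (real\<times>real \<Rightarrow> real) \<Rightarrow> real\<times>real \<Rightarrow> real" where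
"Kf e f = (\<lambda>p. integral {0..1} (\<lambda>v. v * f (fst p - e * (tau (snd p) - tau (snd p * v)), snd p * v)))"

lemma int_v: "integral {0..1::real} (\<lambda>v. v) = 1/2"
proof -
  have "((\<lambda>v::real. v) has_integral ((\<lambda>v. v^2/2) 1 - (\<lambda>v. v^2/2) 0)) {0..1}"
    by (rule fundamental_theorem_of_calculus) (auto intro!: derivative_eq_intros simp: has_real_derivative_iff_has_vector_derivative[symmetric])
  then show ?thesis by (simp add: integral_unique)
qed

lemma Kf_integrand_cont:
  assumes "continuous_on UNIV f"
  shows "continuous_on (UNIV \<times> {0..1}) (\<lambda>(p,v). v * f (fst p - e * (tau (snd p) - tau (snd p * v)), snd p * v))"
  unfolding tau_def
  by (auto simp: split_beta intro!: continuous_intros continuous_on_compose2[OF assms])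

lemma Kf_integrable:
  assumes "continuous_on UNIV f"
  shows "(\<lambda>v. v * f (fst p - e * (tau (snd p) - tau (snd p * v)), snd p * v)) integrable_on {0..1}"
  by (rule integrable_continuous_interval) (unfold tau_def, auto intro!: continuous_intros continuous_on_compose2[OF assms])

lemma Kf_cont:
  assumes "continuous_on UNIV f"
  shows "continuous_on UNIV (Kf e f)"
proof -
  have "continuous_on UNIV (\<lambda>p. integral (cbox 0 1) (\<lambda>v. v * f (fst p - e * (tau (snd p) - tau (snd p * v)), snd p * v)))"
    by (rule integral_continuous_on_param) (use Kf_integrand_cont[OF assms, of e] in \<open>simp add: cbox_interval\<close>)
  then show ?thesis by (simp add: Kf_def cbox_interval)
qed

lemma Kf_bound:
  assumes "continuous_on UNIV f" "\<And>p. \<bar>f p\<bar> \<le> B"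
  shows "\<bar>Kf e f p\<bar> \<le> B/2"
proof -
  have "norm (Kf e f p) \<le> integral {0..1} (\<lambda>v. v * B)"
    unfolding Kf_def
    apply (rule integral_norm_bound_integral[OF Kf_integrable[OF assms(1)]])
     apply (auto intro!: integrable_continuous_interval continuous_intros simp: abs_mult)
    by (metis assms(2) mult_left_mono)
  also have "\<dots> = B/2" using int_v by simp
  finally show ?thesis by simp
qed


lemma abs_bcontfun_le: "\<bar>apply_bcontfun (f::(real\<times>real) \<Rightarrow>\<^sub>C real) p\<bar> \<le> norm f"
  using norm_bounded[of f p] by simp

lemma Kf_bound_bc: "\<bar>Kf e (apply_bcontfun (f::(real\<times>real) \<Rightarrow>\<^sub>C real)) p\<bar> \<le> norm f / 2"
  by (rule Kf_bound) (auto simp: abs_bcontfun_le)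

lemma Kf_bcontfun: "Kf e (apply_bcontfun (f::(real\<times>real) \<Rightarrow>\<^sub>C real)) \<in> bcontfun"
proof (rule bcontfun_normI[where b="norm f/2"])
  show "continuous_on UNIV (Kf e (apply_bcontfun f))" by (rule Kf_cont) simp
  fix p show "norm (Kf e (apply_bcontfun f) p) \<le> norm f / 2" using Kf_bound_bc[of e f p] by simp
qed

definition Kc :: "real \<Rightarrow> ((real\<times>real) \<Rightarrow>\<^sub>C real) \<Rightarrow> ((real\<times>real) \<Rightarrow>\<^sub>C real)" where
  "Kc e f = Bcontfun (Kf e (apply_bcontfun f))"

lemma Kc_apply: "apply_bcontfun (Kc e f) = Kf e (apply_bcontfun f)"
  unfolding Kc_def using Kf_bcontfun by (simp add: Bcontfun_inverse)

lemma Kc_norm: "norm (Kc e f) \<le> norm f / 2"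
  by (rule norm_bound) (unfold Kc_apply real_norm_def, rule Kf_bound_bc)

lemma Kc_add: "Kc e (f + g) = Kc e f + Kc e g"
proof (rule bcontfun_eqI)
  fix p
  show "apply_bcontfun (Kc e (f + g)) p = apply_bcontfun (Kc e f + Kc e g) p"
    unfolding Kc_apply plus_bcontfun.rep_eq Kf_def
    by (simp add: distrib_left integral_add[OF Kf_integrable Kf_integrable, unfolded Kf_def])
qed

lemma Kc_scale: "Kc e (c *\<^sub>R f) = c *\<^sub>R Kc e f"
proof (rule bcontfun_eqI)
  fix p
  show "apply_bcontfun (Kc e (c *\<^sub>R f)) p = apply_bcontfun (c *\<^sub>R Kc e f) p"
    unfolding Kc_apply scaleR_bcontfun.rep_eq Kf_def
    by (simp add: mult.left_commute[of _ c] integral_mult_right)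
qed

lemma Kc_linear: "bounded_linear (Kc e)"
  by (rule bounded_linear_intro[where K="1/2"]) (use Kc_norm in \<open>auto simp: Kc_add Kc_scale\<close>)

definition shf :: "real \<Rightarrow> ((real\<times>real) \<Rightarrow>\<^sub>C real) \<Rightarrow> ((real\<times>real) \<Rightarrow>\<^sub>C real)" where
  "shf h f = Bcontfun (\<lambda>p. apply_bcontfun f (fst p + h, snd p))"

lemma shf_bcontfun: "(\<lambda>p. apply_bcontfun (f::(real\<times>real) \<Rightarrow>\<^sub>C real) (fst p + h, snd p)) \<in> bcontfun"
  by (rule bcontfun_normI[where b="norm f"]) (auto simp: abs_bcontfun_le intro!: continuous_intros continuous_on_compose2[OF continuous_on_apply_bcontfun])

lemma shf_apply: "apply_bcontfun (shf h f) p = apply_bcontfun f (fst p + h, snd p)"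
  unfolding shf_def using shf_bcontfun[of f h] by (simp add: Bcontfun_inverse)

lemma shf_linear: "bounded_linear (shf h)"
  by (rule bounded_linear_intro[where K=1]) (auto intro!: bcontfun_eqI norm_bound simp: shf_apply abs_bcontfun_le)

lemma Kc_shf: "Kc e (shf h f) = shf h (Kc e f)"
  by (rule bcontfun_eqI) (simp add: Kc_apply shf_apply Kf_def algebra_simps)


type_synonym bf = "(real\<times>real) \<Rightarrow>\<^sub>C real"

definition Phi :: "bf \<times> bf \<Rightarrow> bf \<times> bf \<Rightarrow> bf \<times> bf" where
"Phi k w = (Kc 1 ((1/2) *\<^sub>R (fst w - snd w) + fst k), Kc (-1) ((1/2) *\<^sub>R (snd w - fst w) + snd k))"

lemma Kc_diff: "Kc e a - Kc e b = Kc e (a - b)"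
proof -
  interpret bounded_linear "Kc e" by (rule Kc_linear)
  show ?thesis by (simp add: diff)
qed

lemma Kc_dist: "dist (Kc e ((1/2) *\<^sub>R (a - b) + c)) (Kc e ((1/2) *\<^sub>R (a' - b') + c)) \<le> (dist a a' + dist b b')/4"
proof -
  have "dist (Kc e ((1/2) *\<^sub>R (a - b) + c)) (Kc e ((1/2) *\<^sub>R (a' - b') + c))
      = norm (Kc e ((1/2) *\<^sub>R ((a - a') - (b - b'))))"
    by (simp add: dist_norm Kc_diff algebra_simps)
  also have "\<dots> \<le> norm ((1/2) *\<^sub>R ((a - a') - (b - b'))) / 2" by (rule Kc_norm)
  also have "\<dots> = norm ((a - a') - (b - b')) / 4" by simp
  also have "\<dots> \<le> (norm (a - a') + norm (b - b'))/4" using norm_triangle_ineq4[of "a-a'" "b-b'"] by simp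
  finally show ?thesis by (simp add: dist_norm)
qed

lemma sqrt_aux: assumes "0 \<le> d1" "0 \<le> d2" "d1 \<le> (a+b)/4" "d2 \<le> (a+b)/4" "0 \<le> a" "0 \<le> b"
  shows "sqrt (d1^2 + d2^2) \<le> 1/2 * sqrt (a^2 + b^2)"
proof -
  have "d1^2 \<le> ((a+b)/4)^2" using assms by (intro power_mono) auto
  moreover have "d2^2 \<le> ((a+b)/4)^2" using assms by (intro power_mono) auto
  moreover have "(a+b)^2 \<le> 2*(a^2+b^2)" using sum_squares_ge_zero[of "a-b" 0]
    by (simp add: power2_eq_square algebra_simps)
  ultimately have "d1^2 + d2^2 \<le> (a^2+b^2)/4" by (simp add: power_divide)
  then have "sqrt (d1^2 + d2^2) \<le> sqrt ((a^2+b^2)/4)" by (rule real_sqrt_le_mono)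
  also have "\<dots> = 1/2 * sqrt (a^2+b^2)" by (simp add: real_sqrt_divide)
  finally show ?thesis .
qed

lemma Phi_contr: "dist (Phi k w) (Phi k w') \<le> 1/2 * dist w w'"
proof -
  obtain a b where w: "w = (a,b)" by (cases w)
  obtain a' b' where w': "w' = (a',b')" by (cases w')
  have "dist (Phi k w) (Phi k w') = sqrt ((dist (Kc 1 ((1/2) *\<^sub>R (a - b) + fst k)) (Kc 1 ((1/2) *\<^sub>R (a' - b') + fst k)))^2
      + (dist (Kc (-1) ((1/2) *\<^sub>R (b - a) + snd k)) (Kc (-1) ((1/2) *\<^sub>R (b' - a') + snd k)))^2)"
    by (simp add: Phi_def w w' dist_Pair_Pair)
  also have "\<dots> \<le> 1/2 * sqrt ((dist a a')^2 + (dist b b')^2)"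
    by (rule sqrt_aux) (use Kc_dist[of 1 a b "fst k" a' b'] Kc_dist[of "-1" b a "snd k" b' a'] in \<open>auto simp: dist_commute\<close>)
  also have "\<dots> = 1/2 * dist w w'" by (simp add: w w' dist_Pair_Pair)
  finally show ?thesis .
qed

lemma Phi_ex1: "\<exists>!w. Phi k w = w"
proof (rule banach_fix_type[where c="1/2"])
  show "\<forall>x y. dist (Phi k x) (Phi k y) \<le> 1/2 * dist x y" using Phi_contr by blast
qed auto

definition Sol :: "bf \<times> bf \<Rightarrow> bf \<times> bf" where "Sol k = (THE w. Phi k w = w)"

lemma Sol_fix: "Phi k (Sol k) = Sol k"
  unfolding Sol_def by (rule theI'[OF Phi_ex1])

lemma Sol_unique: "Phi k w = w \<Longrightarrow> w = Sol k"
  using Phi_ex1 Sol_fix by metis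

definition DQ :: "real \<Rightarrow> bf \<Rightarrow> bf" where "DQ h f = (1/h) *\<^sub>R (shf h f - f)"

definition hasdx :: "bf \<Rightarrow> bf \<Rightarrow> bool" where "hasdx f f' \<longleftrightarrow> ((\<lambda>h. DQ h f) \<longlongrightarrow> f') (at 0)"

lemma z_bound:
  assumes "z1 = Kc 1 ((1/2) *\<^sub>R (z1 - z2) + j1)" "z2 = Kc (-1) ((1/2) *\<^sub>R (z2 - z1) + j2)"
  shows "norm z1 + norm z2 \<le> norm j1 + norm j2"
proof -
  have a1: "norm z1 \<le> norm ((1/2) *\<^sub>R (z1 - z2) + j1) / 2" using Kc_norm assms(1) by metis
  have b1: "norm ((1/2) *\<^sub>R (z1 - z2) + j1) \<le> norm (z1 - z2)/2 + norm j1"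
    using norm_triangle_ineq[of "(1/2) *\<^sub>R (z1 - z2)" j1] by simp
  have a2: "norm z2 \<le> norm ((1/2) *\<^sub>R (z2 - z1) + j2) / 2" using Kc_norm assms(2) by metis
  have b2: "norm ((1/2) *\<^sub>R (z2 - z1) + j2) \<le> norm (z2 - z1)/2 + norm j2"
    using norm_triangle_ineq[of "(1/2) *\<^sub>R (z2 - z1)" j2] by simp
  from a1 a2 b1 b2 norm_triangle_ineq4[of z1 z2] norm_triangle_ineq4[of z2 z1] show ?thesis by linarith
qed

lemma shf_ops: "shf h (a + b) = shf h a + shf h b" "shf h (a - b) = shf h a - shf h b" "shf h (c *\<^sub>R a) = c *\<^sub>R shf h a"
proof -
  interpret bounded_linear "shf h" by (rule shf_linear)
  show "shf h (a + b) = shf h a + shf h b" "shf h (a - b) = shf h a - shf h b" "shf h (c *\<^sub>R a) = c *\<^sub>R shf h a"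
    by (simp_all add: add diff scaleR)
qed

lemma Kc_ops: "Kc e (a + b) = Kc e a + Kc e b" "Kc e (a - b) = Kc e a - Kc e b" "Kc e (c *\<^sub>R a) = c *\<^sub>R Kc e a"
proof -
  interpret bounded_linear "Kc e" by (rule Kc_linear)
  show "Kc e (a + b) = Kc e a + Kc e b" "Kc e (a - b) = Kc e a - Kc e b" "Kc e (c *\<^sub>R a) = c *\<^sub>R Kc e a"
    by (simp_all add: add diff scaleR)
qed

lemma Sol_shf: "Sol (shf h (fst k), shf h (snd k)) = (shf h (fst (Sol k)), shf h (snd (Sol k)))"
proof -
  have "Phi (shf h (fst k), shf h (snd k)) (shf h (fst (Sol k)), shf h (snd (Sol k))) = (shf h (fst (Sol k)), shf h (snd (Sol k)))"
    using Sol_fix[of k] unfolding Phi_def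
    by (metis (no_types, lifting) Kc_shf prod.inject shf_ops fst_conv snd_conv surj_pair)
  then show ?thesis by (metis Sol_unique)
qed

lemma Sol_components:
  "fst (Sol k) = Kc 1 ((1/2) *\<^sub>R (fst (Sol k) - snd (Sol k)) + fst k)"
  "snd (Sol k) = Kc (-1) ((1/2) *\<^sub>R (snd (Sol k) - fst (Sol k)) + snd k)"
  using Sol_fix[of k] unfolding Phi_def by (metis fst_conv, metis snd_conv)

lemma dq_alg:
  assumes "sw1 = Kc e ((1/2) *\<^sub>R (sw1 - sw2) + sk1)" "w1 = Kc e ((1/2) *\<^sub>R (w1 - w2) + k1)"
    "p1 = Kc e ((1/2) *\<^sub>R (p1 - p2) + q1)"
  shows "(1/h) *\<^sub>R (sw1 - w1) - p1 = Kc e ((1/2) *\<^sub>R (((1/h) *\<^sub>R (sw1 - w1) - p1) - ((1/h) *\<^sub>R (sw2 - w2) - p2)) + ((1/h) *\<^sub>R (sk1 - k1) - q1))"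
proof -
  let ?X = "(1/2) *\<^sub>R (sw1 - sw2) + sk1" and ?Y = "(1/2) *\<^sub>R (w1 - w2) + k1" and ?Z = "(1/2) *\<^sub>R (p1 - p2) + q1"
  have "(1/2) *\<^sub>R (((1/h) *\<^sub>R (sw1 - w1) - p1) - ((1/h) *\<^sub>R (sw2 - w2) - p2)) + ((1/h) *\<^sub>R (sk1 - k1) - q1)
     = (1/h) *\<^sub>R (?X - ?Y) - ?Z" by (simp add: algebra_simps)
  then have "Kc e ((1/2) *\<^sub>R (((1/h) *\<^sub>R (sw1 - w1) - p1) - ((1/h) *\<^sub>R (sw2 - w2) - p2)) + ((1/h) *\<^sub>R (sk1 - k1) - q1))
     = (1/h) *\<^sub>R (Kc e ?X - Kc e ?Y) - Kc e ?Z" by (simp only: Kc_ops(2,3))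
  also have "\<dots> = (1/h) *\<^sub>R (sw1 - w1) - p1" using assms by simp
  finally show ?thesis by simp
qed

lemma Sol_dq_bound:
  shows "norm (DQ h (fst (Sol k)) - fst (Sol k')) + norm (DQ h (snd (Sol k)) - snd (Sol k'))
     \<le> norm (DQ h (fst k) - fst k') + norm (DQ h (snd k) - snd k')"
proof (rule z_bound)
  let ?w = "Sol k" and ?p = "Sol k'" and ?ws = "Sol (shf h (fst k), shf h (snd k))"
  have s1: "shf h (fst ?w) = Kc 1 ((1/2) *\<^sub>R (shf h (fst ?w) - shf h (snd ?w)) + shf h (fst k))"
    using Sol_components(1)[of "(shf h (fst k), shf h (snd k))"] Sol_shf[of h k] by simp
  have s2: "shf h (snd ?w) = Kc (-1) ((1/2) *\<^sub>R (shf h (snd ?w) - shf h (fst ?w)) + shf h (snd k))"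
    using Sol_components(2)[of "(shf h (fst k), shf h (snd k))"] Sol_shf[of h k] by simp
  show "DQ h (fst ?w) - fst ?p = Kc 1 ((1/2) *\<^sub>R ((DQ h (fst ?w) - fst ?p) - (DQ h (snd ?w) - snd ?p)) + (DQ h (fst k) - fst k'))"
    unfolding DQ_def by (rule dq_alg[OF s1 Sol_components(1)[of k] Sol_components(1)[of k']])
  show "DQ h (snd ?w) - snd ?p = Kc (-1) ((1/2) *\<^sub>R ((DQ h (snd ?w) - snd ?p) - (DQ h (fst ?w) - fst ?p)) + (DQ h (snd k) - snd k'))"
    unfolding DQ_def by (rule dq_alg[OF s2 Sol_components(2)[of k] Sol_components(2)[of k']])
qed




lemma Sol_hasdx:
  assumes "hasdx (fst k) (fst k')" "hasdx (snd k) (snd k')"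
  shows "hasdx (fst (Sol k)) (fst (Sol k'))" "hasdx (snd (Sol k)) (snd (Sol k'))"
proof -
  let ?g = "\<lambda>h. norm (DQ h (fst k) - fst k') + norm (DQ h (snd k) - snd k')"
  have g0: "(?g \<longlongrightarrow> 0) (at 0)"
    using assms unfolding hasdx_def
    by (intro tendsto_add_zero tendsto_norm_zero LIM_zero)
  have b1: "norm (DQ h (fst (Sol k)) - fst (Sol k')) \<le> ?g h" for h
    using Sol_dq_bound[of h k k'] norm_ge_zero[of "DQ h (snd (Sol k)) - snd (Sol k')"] by linarith
  have b2: "norm (DQ h (snd (Sol k)) - snd (Sol k')) \<le> ?g h" for h
    using Sol_dq_bound[of h k k'] norm_ge_zero[of "DQ h (fst (Sol k)) - fst (Sol k')"] by linarith
  have "((\<lambda>h. DQ h (fst (Sol k)) - fst (Sol k')) \<longlongrightarrow> 0) (at 0)"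
    by (rule Lim_null_comparison[OF _ g0]) (intro always_eventually allI b1)
  then show "hasdx (fst (Sol k)) (fst (Sol k'))" unfolding hasdx_def LIM_zero_iff .
  have "((\<lambda>h. DQ h (snd (Sol k)) - snd (Sol k')) \<longlongrightarrow> 0) (at 0)"
    by (rule Lim_null_comparison[OF _ g0]) (intro always_eventually allI b2)
  then show "hasdx (snd (Sol k)) (snd (Sol k'))" unfolding hasdx_def LIM_zero_iff .
qed

lemma bl_hasdx:
  assumes "bounded_linear L" "\<And>h f. L (shf h f) = shf h (L f)" "hasdx f f'"
  shows "hasdx (L f) (L f')"
proof -
  interpret bounded_linear L by fact
  have "DQ h (L f) = L (DQ h f)" for h by (simp add: DQ_def assms(2) diff scaleR)
  then show ?thesis using assms(3) unfolding hasdx_def by (simp add: tendsto)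
qed

lemma Kc_hasdx: "hasdx f f' \<Longrightarrow> hasdx (Kc e f) (Kc e f')"
  by (rule bl_hasdx[OF Kc_linear Kc_shf])

lemma hasdx_add: assumes "hasdx f f'" "hasdx g g'" shows "hasdx (f + g) (f' + g')"
proof -
  have "DQ h (f + g) = DQ h f + DQ h g" for h unfolding DQ_def shf_ops by (simp add: algebra_simps)
  then show ?thesis using assms unfolding hasdx_def by (simp add: tendsto_add)
qed

lemma hasdx_scale: "hasdx f f' \<Longrightarrow> hasdx (c *\<^sub>R f) (c *\<^sub>R f')"
  by (rule bl_hasdx[OF bounded_linear_scaleR_right]) (simp add: shf_ops)

lemma hasdx_deriv:
  assumes "hasdx f f'"
  shows "((\<lambda>y. apply_bcontfun f (y, t)) has_real_derivative apply_bcontfun f' (x, t)) (at x)"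
proof -
  have n0: "((\<lambda>h. norm (DQ h f - f')) \<longlongrightarrow> 0) (at 0)"
    using assms unfolding hasdx_def by (intro tendsto_norm_zero LIM_zero)
  have "((\<lambda>h. (f (x + h, t) - f (x, t)) / h - f' (x, t)) \<longlongrightarrow> 0) (at 0)"
  proof (rule Lim_null_comparison[OF _ n0], intro always_eventually allI)
    fix h
    have "(f (x + h, t) - f (x, t)) / h - f' (x, t) = apply_bcontfun (DQ h f - f') (x, t)"
      by (simp add: DQ_def shf_apply divide_inverse)
    also have "norm \<dots> \<le> norm (DQ h f - f')" by (rule norm_bounded)
    finally show "norm ((f (x + h, t) - f (x, t)) / h - f' (x, t)) \<le> norm (DQ h f - f')" .
  qed
  then show ?thesis unfolding DERIV_def LIM_zero_iff .
qed

lemma lip: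
  assumes "\<And>z. (\<phi> has_real_derivative \<phi>' z) (at z)" "\<And>z. \<bar>z - a\<bar> \<le> \<bar>b - a\<bar> \<Longrightarrow> \<bar>\<phi>' z\<bar> \<le> K"
  shows "\<bar>\<phi> b - \<phi> a\<bar> \<le> K * \<bar>b - a\<bar>"
proof (cases a b rule: linorder_cases)
  case less
  then obtain z where z: "a < z" "z < b" "\<phi> b - \<phi> a = (b - a) * \<phi>' z" using MVT2[of a b \<phi> \<phi>'] assms(1) by blast
  then have "\<bar>\<phi>' z\<bar> \<le> K" using assms(2)[of z] by auto
  then show ?thesis using z by (simp add: abs_mult mult.commute mult_right_mono)
next
  case greater
  then obtain z where z: "b < z" "z < a" "\<phi> a - \<phi> b = (a - b) * \<phi>' z" using MVT2[of b a \<phi> \<phi>'] assms(1) by blast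
  then have "\<bar>\<phi>' z\<bar> \<le> K" using assms(2)[of z] by auto
  then show ?thesis using z by (simp add: abs_mult mult.commute mult_right_mono abs_minus_commute)
qed simp

lemma taylor2_bound:
  assumes "\<And>z. (g has_real_derivative g' z) (at z)" "\<And>z. (g' has_real_derivative g'' z) (at z)" "\<And>z. \<bar>g'' z\<bar> \<le> M"
  shows "\<bar>g (y + h) - g y - h * g' y\<bar> \<le> M * h^2"
proof -
  have l1: "\<bar>g' z - g' y\<bar> \<le> M * \<bar>z - y\<bar>" for z by (rule lip[OF assms(2)]) (use assms(3) in auto)
  have "\<bar>(g (y+h) - (y+h) * g' y) - (g y - y * g' y)\<bar> \<le> (M * \<bar>h\<bar>) * \<bar>(y+h) - y\<bar>"
  proof (rule lip[where \<phi>'="\<lambda>z. g' z - g' y"])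
    show "((\<lambda>z. g z - z * g' y) has_real_derivative g' z - g' y) (at z)" for z
      by (auto intro!: derivative_eq_intros assms(1))
    show "\<bar>g' z - g' y\<bar> \<le> M * \<bar>h\<bar>" if "\<bar>z - y\<bar> \<le> \<bar>y + h - y\<bar>" for z
    proof -
      have "0 \<le> M" using assms(3)[of 0] by linarith
      then have "M * \<bar>z - y\<bar> \<le> M * \<bar>h\<bar>" using that by (intro mult_left_mono) auto
      with l1[of z] show ?thesis by linarith
    qed
  qed
  moreover have "(g (y+h) - (y+h) * g' y) - (g y - y * g' y) = g (y + h) - g y - h * g' y" by (simp add: algebra_simps)
  moreover have "(M * \<bar>h\<bar>) * \<bar>(y+h) - y\<bar> = M * h^2"
  proof -
    have "\<bar>h\<bar> * \<bar>h\<bar> = h^2" by (simp add: power2_eq_square abs_mult_self_eq)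
    then show ?thesis by (simp add: mult.assoc)
  qed
  ultimately show ?thesis by metis
qed



definition lift :: "(real \<Rightarrow> real) \<Rightarrow> bf" where "lift g = Bcontfun (\<lambda>p. g (fst p))"

lemma lift_bc: "continuous_on UNIV (g::real\<Rightarrow>real) \<Longrightarrow> (\<And>y. \<bar>g y\<bar> \<le> B) \<Longrightarrow> (\<lambda>p. g (fst p)) \<in> bcontfun"
  by (rule bcontfun_normI[where b=B]) (auto intro!: continuous_intros continuous_on_compose2[of UNIV g])

lemma lift_apply: "continuous_on UNIV (g::real\<Rightarrow>real) \<Longrightarrow> (\<And>y. \<bar>g y\<bar> \<le> (B::real)) \<Longrightarrow> apply_bcontfun (lift g) p = g (fst p)"
  unfolding lift_def by (subst Bcontfun_inverse[OF lift_bc]) auto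

definition mt :: "(real \<Rightarrow> real) \<Rightarrow> bf \<Rightarrow> bf" where "mt a f = Bcontfun (\<lambda>p. a (snd p) * apply_bcontfun f p)"

lemma mt_bc: "continuous_on UNIV (a::real\<Rightarrow>real) \<Longrightarrow> (\<And>s. \<bar>a s\<bar> \<le> A) \<Longrightarrow> (\<lambda>p. a (snd p) * apply_bcontfun (f::bf) p) \<in> bcontfun"
proof (rule bcontfun_normI[where b="A * norm f"])
  assume a: "continuous_on UNIV a" "\<And>s. \<bar>a s\<bar> \<le> A"
  show "continuous_on UNIV (\<lambda>p. a (snd p) * apply_bcontfun f p)"
    by (auto intro!: continuous_intros continuous_on_compose2[OF a(1)])
  fix p
  show "norm (a (snd p) * apply_bcontfun f p) \<le> A * norm f"
    using a(2)[of "snd p"] abs_bcontfun_le[of f p] by (simp add: abs_mult mult_mono')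
qed

lemma mt_apply: "continuous_on UNIV (a::real\<Rightarrow>real) \<Longrightarrow> (\<And>s. \<bar>a s\<bar> \<le> A) \<Longrightarrow> apply_bcontfun (mt a f) p = a (snd p) * f p"
  unfolding mt_def by (subst Bcontfun_inverse[OF mt_bc]) auto

lemma hasdx_mt:
  assumes a: "continuous_on UNIV a" "\<And>s. \<bar>a s\<bar> \<le> A" and "hasdx f f'"
  shows "hasdx (mt a f) (mt a f')"
proof (rule bl_hasdx[OF _ _ assms(3)])
  show "bounded_linear (mt a)"
  proof (rule bounded_linear_intro[where K=A])
    show "mt a (x + y) = mt a x + mt a y" for x y by (rule bcontfun_eqI) (simp add: mt_apply[OF a] algebra_simps)
    show "mt a (r *\<^sub>R x) = r *\<^sub>R mt a x" for r x by (rule bcontfun_eqI) (simp add: mt_apply[OF a] algebra_simps)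
    show "norm (mt a x) \<le> norm x * A" for x
    proof (rule norm_bound)
      fix p
      show "norm (apply_bcontfun (mt a x) p) \<le> norm x * A"
      proof -
        have "\<bar>a (snd p)\<bar> * \<bar>apply_bcontfun x p\<bar> \<le> A * norm x"
          using a(2)[of "snd p"] abs_bcontfun_le[of x p] by (intro mult_mono') auto
        then show ?thesis by (simp add: mt_apply[OF a] abs_mult mult.commute)
      qed
    qed
  qed
  show "mt a (shf h f) = shf h (mt a f)" for h f by (rule bcontfun_eqI) (simp add: mt_apply[OF a] shf_apply)
qed

lemma hasdx_lift:
  fixes g :: "real \<Rightarrow> real"
  assumes d1: "\<And>z. (g has_real_derivative g' z) (at z)" and d2: "\<And>z. (g' has_real_derivative g'' z) (at z)"
    and M: "\<And>z. \<bar>g'' z\<bar> \<le> M" and B: "\<And>z. \<bar>g z\<bar> \<le> B" "\<And>z. \<bar>g' z\<bar> \<le> B'"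
  shows "hasdx (lift g) (lift g')"
proof -
  have c1: "continuous_on UNIV g" using d1 by (meson DERIV_isCont continuous_at_imp_continuous_on)
  have c2: "continuous_on UNIV g'" using d2 by (meson DERIV_isCont continuous_at_imp_continuous_on)
  have bnd: "norm (DQ h (lift g) - lift g') \<le> M * \<bar>h\<bar>" if "h \<noteq> 0" for h
  proof (rule norm_bound)
    fix p :: "real \<times> real"
    obtain y t where p: "p = (y,t)" by (cases p)
    have "apply_bcontfun (DQ h (lift g) - lift g') p = (g (y + h) - g y - h * g' y) / h"
      using that by (simp add: DQ_def shf_apply lift_apply[OF c1 B(1)] lift_apply[OF c2 B(2)] p field_simps)
    also have "norm \<dots> \<le> M * h^2 / \<bar>h\<bar>"
      using taylor2_bound[OF d1 d2 M, of y h] that by (simp add: divide_right_mono)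
    also have "\<dots> = M * \<bar>h\<bar>"
    proof -
      show ?thesis using that by (simp add: divide_simps power2_eq_square mult.assoc abs_mult_self_eq)
    qed
    finally show "norm (apply_bcontfun (DQ h (lift g) - lift g') p) \<le> M * \<bar>h\<bar>" .
  qed
  have "((\<lambda>h. DQ h (lift g) - lift g') \<longlongrightarrow> 0) (at 0)"
  proof (rule Lim_null_comparison)
    show "\<forall>\<^sub>F h in at 0. norm (DQ h (lift g) - lift g') \<le> M * \<bar>h\<bar>"
      using bnd by (auto simp: eventually_at_filter)
    show "((\<lambda>h. M * \<bar>h\<bar>) \<longlongrightarrow> 0) (at 0)" by (intro tendsto_mult_right_zero tendsto_rabs_zero tendsto_ident_at)
  qed
  then show ?thesis unfolding hasdx_def LIM_zero_iff .
qed



lemma image_div_Icc: "(t::real) > 0 \<Longrightarrow> (\<lambda>x. x / t) ` {0..t} = {0..1}"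
proof
  assume t: "t > 0"
  show "(\<lambda>x. x / t) ` {0..t} \<subseteq> {0..1}" using t by auto
  show "{0..1} \<subseteq> (\<lambda>x. x / t) ` {0..t}"
  proof
    fix y :: real assume "y \<in> {0..1}"
    then have "t * y \<in> {0..t}" "y = (t*y)/t" using t by (auto simp: mult_le_cancel_left1)
    then show "y \<in> (\<lambda>x. x / t) ` {0..t}" by blast
  qed
qed

lemma subst_int:
  fixes \<psi> :: "real \<Rightarrow> real"
  assumes "continuous_on UNIV \<psi>" "t \<ge> 0"
  shows "t^2 * integral {0..1} (\<lambda>v. v * \<psi> (t * v)) = integral {0..t} (\<lambda>s. s * \<psi> s)"
proof (cases "t = 0")
  case True then show ?thesis by simp
next
  case False
  then have t: "t > 0" using assms by simp
  have "((\<lambda>s. s * \<psi> s) has_integral integral {0..t} (\<lambda>s. s * \<psi> s)) {0..t}"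
    by (rule integrable_integral, rule integrable_continuous_interval)
       (auto intro!: continuous_intros continuous_on_subset[OF assms(1)])
  from has_integral_stretch_real[OF this, of t] t
  have "((\<lambda>v. (t * v) * \<psi> (t * v)) has_integral (1/t) * integral {0..t} (\<lambda>s. s * \<psi> s)) {0..1}"
    by (simp add: image_div_Icc)
  then have hi: "((\<lambda>v. t * (v * \<psi> (t * v))) has_integral (1/t) * integral {0..t} (\<lambda>s. s * \<psi> s)) {0..1}"
    by (simp add: mult.assoc)
  have "t * integral {0..1} (\<lambda>v. v * \<psi> (t * v)) = (1/t) * integral {0..t} (\<lambda>s. s * \<psi> s)"
    using integral_unique[OF hi] by simp
  then show ?thesis using t by (simp add: power2_eq_square field_simps)
qed


lemma tau_deriv: "(tau has_real_derivative 2 * t^2) (at t within S)"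
  unfolding tau_def by (auto intro!: derivative_eq_intros)

lemma char_C1:
  fixes e \<delta> :: real and g \<phi>x :: bf
  assumes \<delta>: "\<delta> > 0"
    and d\<phi>: "\<And>x t. ((\<lambda>y. apply_bcontfun (Kc e g) (y,t)) has_real_derivative apply_bcontfun \<phi>x (x,t)) (at x)"
  shows "C1_on_region (UNIV \<times> {0..\<delta>}) (\<lambda>x t. t^2 * apply_bcontfun (Kc e g) (x,t)) (\<lambda>x t. t^2 * apply_bcontfun \<phi>x (x,t))
           (\<lambda>x t. t * apply_bcontfun g (x,t) - 2*e*t^2 * (t^2 * apply_bcontfun \<phi>x (x,t)))"
proof -
  define \<phi> where "\<phi> = apply_bcontfun (Kc e g)"
  define H where "H \<xi> s = s * apply_bcontfun g (\<xi> + e * tau s, s)" for \<xi> s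
  define r where "r \<xi> t = t^2 * \<phi> (\<xi> + e * tau t, t)" for \<xi> t
  have gc: "continuous_on UNIV (apply_bcontfun g)" by simp
  have Hc: "continuous_on UNIV (\<lambda>(\<xi>,s). H \<xi> s)"
    unfolding H_def tau_def by (auto simp: split_beta intro!: continuous_intros continuous_on_compose2[OF gc])
  have Hc1: "continuous_on S (H \<xi>)" for \<xi> S
    unfolding H_def tau_def by (auto intro!: continuous_intros continuous_on_compose2[OF gc])
  have r_int: "r \<xi> t = integral {0..t} (H \<xi>)" if "t \<ge> 0" for \<xi> t
  proof -
    have eq: "\<xi> + e * tau t - e * (tau t - tau (t * v)) = \<xi> + e * tau (t * v)" for v by algebra
    have "r \<xi> t = t^2 * integral {0..1} (\<lambda>v. v * (\<lambda>s. apply_bcontfun g (\<xi> + e * tau s, s)) (t * v))"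
      unfolding r_def \<phi>_def Kc_apply Kf_def by (simp add: eq)
    also have "\<dots> = integral {0..t} (\<lambda>s. s * (\<lambda>s. apply_bcontfun g (\<xi> + e * tau s, s)) s)"
      by (rule subst_int[OF _ that]) (unfold tau_def, auto intro!: continuous_intros continuous_on_compose2[OF gc])
    also have "(\<lambda>s. s * (\<lambda>s. apply_bcontfun g (\<xi> + e * tau s, s)) s) = H \<xi>" by (rule ext) (simp add: H_def)
    finally show ?thesis .
  qed
  have rt: "((\<lambda>t. r \<xi> t) has_derivative blinfun_apply (blinfun_mult_right (H \<xi> t))) (at t within {0..\<delta>})"
    if "t \<in> {0..\<delta>}" for \<xi> t
  proof -
    have "((\<lambda>t. integral {0..t} (H \<xi>)) has_real_derivative H \<xi> t) (at t within {0..\<delta>})"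
      by (rule integral_has_real_derivative[OF Hc1 that])
    then have "((\<lambda>t. r \<xi> t) has_real_derivative H \<xi> t) (at t within {0..\<delta>})"
      by (rule has_field_derivative_transform_within[where d=1]) (use that r_int in auto)
    then show ?thesis by (simp add: has_field_derivative_def mult.commute)
  qed
  have rx: "((\<lambda>\<xi>. r \<xi> t) has_derivative (*) (t^2 * \<phi>x (\<xi> + e * tau t, t))) (at \<xi> within UNIV)" for \<xi> t
  proof -
    have "((\<lambda>\<xi>. \<phi> (\<xi> + e * tau t, t)) has_real_derivative \<phi>x (\<xi> + e * tau t, t)) (at \<xi>)"
      using d\<phi>[where x="\<xi> + e * tau t" and t=t] unfolding \<phi>_def DERIV_shift .
    then have "((\<lambda>\<xi>. r \<xi> t) has_real_derivative t^2 * \<phi>x (\<xi> + e * tau t, t)) (at \<xi>)"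
      unfolding r_def by (rule DERIV_cmult)
    then show ?thesis by (simp add: has_field_derivative_def)
  qed
  have Hcont: "continuous (at (\<xi>, t) within UNIV \<times> {0..\<delta>}) (\<lambda>(x, y). blinfun_mult_right (H x y))" for \<xi> t
  proof -
    have "continuous_on UNIV (\<lambda>p. blinfun_mult_right ((\<lambda>(x,y). H x y) p))"
      by (rule continuous_on_compose2[OF _ Hc, of UNIV]) (auto intro: linear_continuous_on bounded_linear_blinfun_mult_right)
    then have "isCont (\<lambda>p. blinfun_mult_right (H (fst p) (snd p))) (\<xi>, t)"
      by (auto simp: split_beta continuous_on_eq_continuous_within)
    then show ?thesis unfolding split_beta by (rule continuous_at_imp_continuous_within)
  qed
  have rD: "((\<lambda>(\<xi>, t). r \<xi> t) has_derivative (\<lambda>(a, b). t^2 * \<phi>x (\<xi> + e * tau t, t) * a + H \<xi> t * b)) (at (\<xi>, t) within UNIV \<times> {0..\<delta>})"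
    if "t \<in> {0..\<delta>}" for \<xi> t
    using has_derivative_partialsI[OF rx rt Hcont that convex_real_interval(5)] by simp
  have main: "((\<lambda>p. (snd p)^2 * \<phi> (fst p, snd p)) has_derivative
      (\<lambda>h. t^2 * \<phi>x (x,t) * fst h + (t * g (x,t) - 2*e*t^2 * (t^2 * \<phi>x (x,t))) * snd h)) (at (x,t) within UNIV \<times> {0..\<delta>})"
    if "t \<in> {0..\<delta>}" for x t
  proof -
    let ?\<Psi> = "\<lambda>p. (fst p - e * tau (snd p), snd p)"
    have \<Psi>D: "(?\<Psi> has_derivative (\<lambda>h. (fst h - e * (2 * t^2 * snd h), snd h))) (at (x,t) within UNIV \<times> {0..\<delta>})"
      unfolding tau_def by (auto intro!: derivative_eq_intros simp: algebra_simps)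
    have "((\<lambda>p. (\<lambda>(\<xi>, t). r \<xi> t) (?\<Psi> p)) has_derivative
        (\<lambda>h. (\<lambda>(\<xi>, t). (\<lambda>(a, b). t^2 * \<phi>x (\<xi> + e * tau t, t) * a + H \<xi> t * b)) (?\<Psi> (x,t)) (fst h - e * (2 * t^2 * snd h), snd h)))
        (at (x,t) within UNIV \<times> {0..\<delta>})"
    proof (rule has_derivative_in_compose2[OF _ _ _ \<Psi>D])
      show "((\<lambda>(\<xi>, t). r \<xi> t) has_derivative (\<lambda>(\<xi>, t). (\<lambda>(a, b). t^2 * \<phi>x (\<xi> + e * tau t, t) * a + H \<xi> t * b)) p) (at p within UNIV \<times> {0..\<delta>})"
        if "p \<in> UNIV \<times> {0..\<delta>}" for p
      proof -
        obtain \<xi> s where p: "p = (\<xi>, s)" by (cases p)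
        show ?thesis using rD[of s \<xi>] that by (simp add: p)
      qed
    qed (use that in auto)
    moreover have "(\<lambda>p. (\<lambda>(\<xi>, t). r \<xi> t) (?\<Psi> p)) = (\<lambda>p. (snd p)^2 * \<phi> (fst p, snd p))"
      by (auto simp: r_def fun_eq_iff)
    moreover have "(\<lambda>h. (\<lambda>(\<xi>, t). (\<lambda>(a, b). t^2 * \<phi>x (\<xi> + e * tau t, t) * a + H \<xi> t * b)) (?\<Psi> (x,t)) (fst h - e * (2 * t^2 * snd h), snd h))
       = (\<lambda>h. t^2 * \<phi>x (x,t) * fst h + (t * g (x,t) - 2*e*t^2 * (t^2 * \<phi>x (x,t))) * snd h)"
      by (auto simp: H_def fun_eq_iff algebra_simps)
    ultimately show ?thesis by simp
  qed
  show ?thesis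
    unfolding C1_on_region_def
  proof (intro conjI)
    show "\<forall>(x, t)\<in>UNIV \<times> {0..\<delta>}. ((\<lambda>p. (snd p)\<^sup>2 * apply_bcontfun (Kc e g) (fst p, snd p)) has_derivative
          (\<lambda>h. t\<^sup>2 * apply_bcontfun \<phi>x (x, t) * fst h + (t * apply_bcontfun g (x, t) - 2 * e * t\<^sup>2 * (t\<^sup>2 * apply_bcontfun \<phi>x (x, t))) * snd h))
          (at (x, t) within UNIV \<times> {0..\<delta>})"
      using main unfolding \<phi>_def by auto
    show "continuous_on (UNIV \<times> {0..\<delta>}) (\<lambda>p. (snd p)\<^sup>2 * apply_bcontfun \<phi>x (fst p, snd p))"
      by (auto intro!: continuous_intros)
    show "continuous_on (UNIV \<times> {0..\<delta>}) (\<lambda>p. snd p * apply_bcontfun g (fst p, snd p) - 2 * e * (snd p)\<^sup>2 * ((snd p)\<^sup>2 * apply_bcontfun \<phi>x (fst p, snd p)))"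
      by (auto intro!: continuous_intros)
  qed
qed



lemma deriv_combine:
  assumes "(F has_field_derivative D) (at x within S)" "(F has_field_derivative D) (at x within T)"
    "x \<in> interior (S \<union> T)"
  shows "(F has_field_derivative D) (at x)"
proof -
  have "(F has_field_derivative D) (at x within (S \<union> T))"
    using assms(1,2) unfolding has_field_derivative_iff Lim_within_Un by simp
  then show ?thesis using at_within_interior[OF assms(3)] by simp
qed

lemma glue:
  fixes f f' P P' Q Q' :: "real \<Rightarrow> real"
  assumes ab: "a < b"
    and df: "\<And>x. x \<in> {a..b} \<Longrightarrow> (f has_real_derivative f' x) (at x within {a..b})"
    and dP: "\<And>x. (P has_real_derivative P' x) (at x)"
    and dQ: "\<And>x. (Q has_real_derivative Q' x) (at x)"
    and Pa: "P a = f a" "P' a = f' a" and Qb: "Q b = f b" "Q' b = f' b"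
  shows "((\<lambda>x. if x < a then P x else if x \<le> b then f x else Q x) has_real_derivative
           (if z < a then P' z else if z \<le> b then f' z else Q' z)) (at z)"
    (is "(?F has_real_derivative ?D) _")
proof -
  consider "z < a" | "z = a" | "a < z" "z < b" | "z = b" | "b < z" by linarith
  then show ?thesis
  proof cases
    case 1
    have "(?F has_real_derivative P' z) (at z)"
      by (rule has_field_derivative_transform_within_open[OF dP[of z], where S="{..<a}"]) (use 1 in auto)
    then show ?thesis using 1 by simp
  next
    case 2
    have d1: "(?F has_real_derivative f' a) (at a within {..a})"
      by (rule has_field_derivative_transform_within[OF has_field_derivative_at_within[OF dP[of a, unfolded Pa(2)]], where d=1])
         (use Pa ab in auto)
    have d2: "(?F has_real_derivative f' a) (at a within {a..b})"
      by (rule has_field_derivative_transform_within[OF df[of a], where d=1]) (use ab in auto)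
    have "a \<in> interior ({..a} \<union> {a..b})"
    proof -
      have "{..a} \<union> {a..b} = {..b}" using ab by auto
      then show ?thesis using ab by simp
    qed
    from deriv_combine[OF d1 d2 this] show ?thesis using 2 ab by simp
  next
    case 3
    have "(f has_real_derivative f' z) (at z)"
      using df[of z] 3 at_within_interior[of z "{a..b}"] by simp
    then have "(?F has_real_derivative f' z) (at z)"
      by (rule has_field_derivative_transform_within_open[where S="{a<..<b}"]) (use 3 in auto)
    then show ?thesis using 3 by simp
  next
    case 4
    have d1: "(?F has_real_derivative f' b) (at b within {a..b})"
      by (rule has_field_derivative_transform_within[OF df[of b], where d=1]) (use ab in auto)
    have d2: "(?F has_real_derivative f' b) (at b within {b..})"
      by (rule has_field_derivative_transform_within[OF has_field_derivative_at_within[OF dQ[of b, unfolded Qb(2)]], where d=1])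
         (use Qb ab in auto)
    have "b \<in> interior ({a..b} \<union> {b..})"
    proof -
      have "{a..b} \<union> {b..} = {a..}" using ab by auto
      then show ?thesis using ab by simp
    qed
    from deriv_combine[OF d1 d2 this] show ?thesis using 4 ab by simp
  next
    case 5
    have "(?F has_real_derivative Q' z) (at z)"
      by (rule has_field_derivative_transform_within_open[OF dQ[of z], where S="{b<..}"]) (use 5 ab in auto)
    then show ?thesis using 5 ab by simp
  qed
qed


definition wv :: "nat \<Rightarrow> real \<Rightarrow> real" where
  "wv i x = (if i mod 4 = 0 then sin x else if i mod 4 = 1 then cos x else if i mod 4 = 2 then - sin x else - cos x)"

lemma w_deriv: "(wv i has_real_derivative wv (Suc i) x) (at x)"
proof -
  have "i mod 4 = 0 \<or> i mod 4 = 1 \<or> i mod 4 = 2 \<or> i mod 4 = 3" by linarith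
  moreover have "Suc i mod 4 = (if i mod 4 = 3 then 0 else Suc (i mod 4))" by (simp add: mod_Suc)
  ultimately show ?thesis unfolding wv_def by (auto intro!: derivative_eq_intros)
qed

lemma w_bound: "\<bar>wv i x\<bar> \<le> 1"
  unfolding wv_def by (auto simp: abs_sin_le_one abs_cos_le_one)

definition Exb :: "(nat \<Rightarrow> real) \<Rightarrow> nat \<Rightarrow> real \<Rightarrow> real" where
"Exb c i d = c 0 * (if i = 0 then 1 else 0) + c 1 * (4/3 * wv i d - 2^i/6 * wv i (2*d))
   + c 2 * ((if i = 0 then 1 else 0) - wv (Suc i) d) + c 3 * (1/3 * wv i d - 2^i/6 * wv i (2*d))"

lemma Ex_deriv: "(Exb c i has_real_derivative Exb c (Suc i) d) (at d)"
  unfolding Exb_def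
  by (auto intro!: derivative_eq_intros w_deriv[THEN DERIV_chain2] w_deriv simp: algebra_simps)

lemma Ex_0: "i \<le> 3 \<Longrightarrow> Exb c i 0 = c i"
proof -
  assume "i \<le> 3"
  then consider "i = 0" | "i = 1" | "i = 2" | "i = 3" by linarith
  then show ?thesis by cases (simp_all add: Exb_def wv_def)
qed

lemma pq_bound: "\<bar>p * wv i x + q * wv i y\<bar> \<le> \<bar>p\<bar> + \<bar>q\<bar>"
proof -
  have "\<bar>p * wv i x\<bar> \<le> \<bar>p\<bar>" using w_bound[of i x] by (simp add: abs_mult mult_left_le)
  moreover have "\<bar>q * wv i y\<bar> \<le> \<bar>q\<bar>" using w_bound[of i y] by (simp add: abs_mult mult_left_le)
  ultimately show ?thesis by (meson abs_triangle_ineq order_trans add_mono)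
qed

lemma Ex_bound: "\<bar>Exb c i d\<bar> \<le> (\<bar>c 0\<bar> + \<bar>c 1\<bar> + \<bar>c 2\<bar> + \<bar>c 3\<bar>) * (2 + 2^i)"
proof -
  have b0: "\<bar>c 0 * (if i = 0 then 1 else 0)\<bar> \<le> \<bar>c 0\<bar> * (2 + 2^i)" by (auto simp: abs_mult)
  have "\<bar>4/3 * wv i d - 2^i/6 * wv i (2*d)\<bar> \<le> 2 + 2^i"
  proof -
    have "\<bar>4/3 * wv i d - 2^i/6 * wv i (2*d)\<bar> \<le> \<bar>4/3\<bar> + \<bar>- (2^i/6)\<bar>"
      using pq_bound[of "4/3" i d "- (2^i/6)" "2*d"] by simp
    moreover have p: "(0::real) \<le> 2^i" by simp
    moreover have "\<bar>4/3::real\<bar> + \<bar>- (2^i/6)\<bar> = 4/3 + 2^i/6" using p by simp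
    ultimately show ?thesis by linarith
  qed
  then have b1: "\<bar>c 1 * (4/3 * wv i d - 2^i/6 * wv i (2*d))\<bar> \<le> \<bar>c 1\<bar> * (2 + 2^i)"
    by (simp add: abs_mult mult_left_mono)
  have "\<bar>(if i = 0 then 1 else 0) - wv (Suc i) d\<bar> \<le> 2 + 2^i"
  proof -
    have "\<bar>(if i = 0 then 1 else 0) - wv (Suc i) d\<bar> \<le> 2"
      using w_bound[of "Suc i" d] by (auto simp: abs_le_iff)
    moreover have "(0::real) \<le> 2^i" by simp
    ultimately show ?thesis by linarith
  qed
  then have b2: "\<bar>c 2 * ((if i = 0 then 1 else 0) - wv (Suc i) d)\<bar> \<le> \<bar>c 2\<bar> * (2 + 2^i)"
    by (simp add: abs_mult mult_left_mono)
  have "\<bar>1/3 * wv i d - 2^i/6 * wv i (2*d)\<bar> \<le> 2 + 2^i"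
  proof -
    have "\<bar>1/3 * wv i d - 2^i/6 * wv i (2*d)\<bar> \<le> \<bar>1/3\<bar> + \<bar>- (2^i/6)\<bar>"
      using pq_bound[of "1/3" i d "- (2^i/6)" "2*d"] by simp
    moreover have p: "(0::real) \<le> 2^i" by simp
    moreover have "\<bar>1/3::real\<bar> + \<bar>- (2^i/6)\<bar> = 1/3 + 2^i/6" using p by simp
    ultimately show ?thesis by linarith
  qed
  then have b3: "\<bar>c 3 * (1/3 * wv i d - 2^i/6 * wv i (2*d))\<bar> \<le> \<bar>c 3\<bar> * (2 + 2^i)"
    by (simp add: abs_mult mult_left_mono)
  show ?thesis unfolding Exb_def using b0 b1 b2 b3 unfolding abs_le_iff by (simp add: algebra_simps)
qed


definition extd :: "real \<Rightarrow> real \<Rightarrow> (nat \<Rightarrow> real \<Rightarrow> real) \<Rightarrow> nat \<Rightarrow> real \<Rightarrow> real" where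
"extd a b f i x = (if x < a then Exb (\<lambda>j. f j a) i (x - a) else if x \<le> b then f i x else Exb (\<lambda>j. f j b) i (x - b))"

lemma Ex_shift_deriv: "((\<lambda>x. Exb c i (x - a)) has_real_derivative Exb c (Suc i) (x - a)) (at x)"
  using DERIV_shift[of "Exb c i" "Exb c (Suc i) (x - a)" x "-a"] Ex_deriv[of c i "x - a"] by simp

lemma extd_deriv:
  assumes "a < b" "Ck_on_interval 3 a b f" "i < 3"
  shows "(extd a b f i has_real_derivative extd a b f (Suc i) z) (at z)"
proof -
  have df: "\<And>x. x \<in> {a..b} \<Longrightarrow> (f i has_real_derivative f (Suc i) x) (at x within {a..b})"
    using assms(2,3) unfolding Ck_on_interval_def by blast
  have "((\<lambda>x. if x < a then Exb (\<lambda>j. f j a) i (x - a) else if x \<le> b then f i x else Exb (\<lambda>j. f j b) i (x - b)) has_real_derivative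
     (if z < a then Exb (\<lambda>j. f j a) (Suc i) (z - a) else if z \<le> b then f (Suc i) z else Exb (\<lambda>j. f j b) (Suc i) (z - b))) (at z)"
    by (rule glue[OF assms(1) df Ex_shift_deriv Ex_shift_deriv]) (use assms(3) in \<open>simp_all add: Ex_0\<close>)
  then show ?thesis unfolding extd_def[abs_def] .
qed

lemma extd_eq: "x \<in> {a..b} \<Longrightarrow> extd a b f i x = f i x"
  by (simp add: extd_def)

lemma extd_bound:
  assumes "Ck_on_interval 3 a b f" "i \<le> 3"
  shows "\<exists>B. \<forall>z. \<bar>extd a b f i z\<bar> \<le> B"
proof -
  have "continuous_on {a..b} (f i)" using assms unfolding Ck_on_interval_def by blast
  then have "bounded (f i ` {a..b})" by (intro compact_imp_bounded compact_continuous_image) auto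
  then obtain B1 where "\<forall>y\<in>f i ` {a..b}. \<bar>y\<bar> \<le> B1" unfolding bounded_real by blast
  then have B1: "\<And>x. x \<in> {a..b} \<Longrightarrow> \<bar>f i x\<bar> \<le> B1" by blast
  let ?Ba = "(\<bar>f 0 a\<bar> + \<bar>f 1 a\<bar> + \<bar>f 2 a\<bar> + \<bar>f 3 a\<bar>) * (2 + 2^i)"
  let ?Bb = "(\<bar>f 0 b\<bar> + \<bar>f 1 b\<bar> + \<bar>f 2 b\<bar> + \<bar>f 3 b\<bar>) * (2 + 2^i)"
  have "\<bar>extd a b f i z\<bar> \<le> max B1 (max ?Ba ?Bb)" for z
  proof -
    consider "z < a" | "\<not> z < a" "z \<le> b" | "\<not> z < a" "\<not> z \<le> b" by blast
    then show ?thesis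
    proof cases
      case 1
      then have e: "extd a b f i z = Exb (\<lambda>j. f j a) i (z - a)" by (simp add: extd_def)
      have m: "?Ba \<le> max B1 (max ?Ba ?Bb)" by (rule max.coboundedI2, rule max.cobounded1)
      show ?thesis unfolding e by (rule order_trans[OF Ex_bound m])
    next
      case 2
      then have "extd a b f i z = f i z" by (simp add: extd_def)
      moreover have "\<bar>f i z\<bar> \<le> B1" using B1[of z] 2 by simp
      ultimately show ?thesis by (simp add: max.coboundedI1)
    next
      case 3
      then have e: "extd a b f i z = Exb (\<lambda>j. f j b) i (z - b)" by (simp add: extd_def)
      have m: "?Bb \<le> max B1 (max ?Ba ?Bb)" by (rule max.coboundedI2, rule max.cobounded2)
      show ?thesis unfolding e by (rule order_trans[OF Ex_bound m])
    qed
  qed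
  then show ?thesis by blast
qed



lemma C1_mono: "C1_on_region D F Fx Ft \<Longrightarrow> D' \<subseteq> D \<Longrightarrow> C1_on_region D' F Fx Ft"
  unfolding C1_on_region_def
proof (intro conjI ballI)
  assume a: "(\<forall>(x, t)\<in>D. ((\<lambda>p. F (fst p) (snd p)) has_derivative (\<lambda>h. Fx x t * fst h + Ft x t * snd h)) (at (x, t) within D)) \<and>
    continuous_on D (\<lambda>p. Fx (fst p) (snd p)) \<and> continuous_on D (\<lambda>p. Ft (fst p) (snd p))" and s: "D' \<subseteq> D"
  show "continuous_on D' (\<lambda>p. Fx (fst p) (snd p))" "continuous_on D' (\<lambda>p. Ft (fst p) (snd p))"
    using a s by (auto intro: continuous_on_subset)
  fix p assume p: "p \<in> D'"
  obtain x t where pp: "p = (x,t)" by (cases p)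
  have "((\<lambda>p. F (fst p) (snd p)) has_derivative (\<lambda>h. Fx x t * fst h + Ft x t * snd h)) (at (x, t) within D)"
    using a s p pp by auto
  then show "case p of (x, t) \<Rightarrow> ((\<lambda>p. F (fst p) (snd p)) has_derivative (\<lambda>h. Fx x t * fst h + Ft x t * snd h)) (at (x, t) within D')"
    using s by (simp add: pp has_derivative_subset)
qed

lemma Ck_shift: "Ck_on_interval 4 a b u \<Longrightarrow> Ck_on_interval 3 a b (\<lambda>j. u (Suc j))"
  unfolding Ck_on_interval_def by auto

definition clamp :: "real \<Rightarrow> real \<Rightarrow> real" where "clamp \<delta> s = max 0 (min s \<delta>)"

lemma clamp_cont: "continuous_on UNIV (clamp \<delta>)"
  unfolding clamp_def by (intro continuous_intros)

lemma clamp_bound: "\<delta> \<ge> 0 \<Longrightarrow> \<bar>clamp \<delta> s\<bar> \<le> \<delta>"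
  unfolding clamp_def by auto

lemma clamp_id: "s \<in> {0..\<delta>} \<Longrightarrow> clamp \<delta> s = s"
  unfolding clamp_def by auto

lemma ext_facts:
  assumes "a < b" "Ck_on_interval 3 a b f"
  shows "\<And>i z. i < 3 \<Longrightarrow> (extd a b f i has_real_derivative extd a b f (Suc i) z) (at z)"
    "\<And>i. i < 3 \<Longrightarrow> continuous_on UNIV (extd a b f i)"
    "\<And>i. i \<le> 3 \<Longrightarrow> \<exists>B. \<forall>z. \<bar>extd a b f i z\<bar> \<le> B"
    "\<And>i x. x \<in> {a..b} \<Longrightarrow> extd a b f i x = f i x"
proof -
  show d: "\<And>i z. i < 3 \<Longrightarrow> (extd a b f i has_real_derivative extd a b f (Suc i) z) (at z)"
    by (rule extd_deriv[OF assms])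
  show "\<And>i. i < 3 \<Longrightarrow> continuous_on UNIV (extd a b f i)"
    using d by (meson DERIV_isCont continuous_at_imp_continuous_on)
  show "\<And>i. i \<le> 3 \<Longrightarrow> \<exists>B. \<forall>z. \<bar>extd a b f i z\<bar> \<le> B" by (rule extd_bound[OF assms(2)])
  show "\<And>i x. x \<in> {a..b} \<Longrightarrow> extd a b f i x = f i x" by (rule extd_eq)
qed


lemma powc_cont: "continuous_on UNIV (\<lambda>s. \<alpha> * (clamp \<delta> s)^n)"
  using clamp_cont[of \<delta>] by (intro continuous_intros) (auto intro: continuous_on_compose2)

lemma powc_bound: "\<delta> \<ge> 0 \<Longrightarrow> \<bar>\<alpha> * (clamp \<delta> s)^n\<bar> \<le> \<bar>\<alpha>\<bar> * \<delta>^n"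
  using clamp_bound[of \<delta> s] by (simp add: abs_mult power_abs mult_left_mono power_mono)

lemma mt_powc_apply: "\<delta> \<ge> 0 \<Longrightarrow> apply_bcontfun (mt (\<lambda>s. \<alpha> * (clamp \<delta> s)^n) f) p = \<alpha> * (clamp \<delta> (snd p))^n * f p"
  by (rule mt_apply[OF powc_cont powc_bound])

lemma hasdx_mt_powc: "\<delta> \<ge> 0 \<Longrightarrow> hasdx f f' \<Longrightarrow> hasdx (mt (\<lambda>s. \<alpha> * (clamp \<delta> s)^n) f) (mt (\<lambda>s. \<alpha> * (clamp \<delta> s)^n) f')"
  by (rule hasdx_mt[OF powc_cont powc_bound])

theorem theoremA2:
  fixes x1 x2 :: real and u0 u1 :: "nat \<Rightarrow> real \<Rightarrow> real"
  assumes "x1 < x2"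
    and "Ck_on_interval 4 x1 x2 u0"
    and "Ck_on_interval 3 x1 x2 u1"
  shows "\<exists>\<delta>>0. \<delta> \<le> root 3 (3 * (x2 - x1) / 4) \<and>
     (\<exists>R Rx Rt S Sx St W Wx Wt.
        C1_on_region (region_D x1 x2 \<delta>) R Rx Rt \<and>
        C1_on_region (region_D x1 x2 \<delta>) S Sx St \<and>
        C1_on_region (region_D x1 x2 \<delta>) W Wx Wt \<and>
        (\<forall>(x,t)\<in>region_D x1 x2 \<delta>. t > 0 \<longrightarrow>
           Rt x t + 2*t^2 * Rx x t = (R x t - S x t) / (2*t) - 2*t^2 * (u1 1 x + u0 2 x * t) \<and>
           St x t - 2*t^2 * Sx x t = (S x t - R x t) / (2*t) + 2*t^2 * (u1 1 x - u0 2 x * t) \<and>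
           Wt x t - 2*t^2 * Wx x t = - 2*t * (R x t + u1 0 x)) \<and>
        (\<forall>x\<in>{x1..x2}. R x 0 = 0 \<and> S x 0 = 0 \<and> W x 0 = 0 \<and>
                       Rt x 0 = 0 \<and> St x 0 = 0 \<and> Wt x 0 = 0))"
proof -
  note ab = assms(1)
  have cu0: "Ck_on_interval 3 x1 x2 (\<lambda>j. u0 (Suc j))" using assms(2) by (rule Ck_shift)
  define U where "U = extd x1 x2 u1"
  define V where "V = extd x1 x2 (\<lambda>j. u0 (Suc j))"
  note UF = ext_facts[OF ab assms(3), folded U_def]
  note VF = ext_facts[OF ab cu0, folded V_def]
  obtain BU0 where BU0: "\<And>z. \<bar>U 0 z\<bar> \<le> BU0" using UF(3)[of 0] by auto
  obtain BU1 where BU1: "\<And>z. \<bar>U 1 z\<bar> \<le> BU1" using UF(3)[of 1] by auto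
  obtain BU2 where BU2: "\<And>z. \<bar>U 2 z\<bar> \<le> BU2" using UF(3)[of 2] by auto
  obtain BU3 where BU3: "\<And>z. \<bar>U 3 z\<bar> \<le> BU3" using UF(3)[of 3] by auto
  obtain BV1 where BV1: "\<And>z. \<bar>V 1 z\<bar> \<le> BV1" using VF(3)[of 1] by auto
  obtain BV2 where BV2: "\<And>z. \<bar>V 2 z\<bar> \<le> BV2" using VF(3)[of 2] by auto
  obtain BV3 where BV3: "\<And>z. \<bar>V 3 z\<bar> \<le> BV3" using VF(3)[of 3] by auto
  have dU: "\<And>z. (U 0 has_real_derivative U 1 z) (at z)" "\<And>z. (U 1 has_real_derivative U 2 z) (at z)"
    "\<And>z. (U 2 has_real_derivative U 3 z) (at z)" using UF(1)[of 0] UF(1)[of 1] UF(1)[of 2] by (simp_all add: eval_nat_numeral)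
  have dV: "\<And>z. (V 1 has_real_derivative V 2 z) (at z)"
    "\<And>z. (V 2 has_real_derivative V 3 z) (at z)" using VF(1)[of 1] VF(1)[of 2] by (simp_all add: eval_nat_numeral)
  have cU: "continuous_on UNIV (U 0)" "continuous_on UNIV (U 1)" "continuous_on UNIV (U 2)"
    using UF(2)[of 0] UF(2)[of 1] UF(2)[of 2] by simp_all
  have cV: "continuous_on UNIV (V 1)" "continuous_on UNIV (V 2)"
    using VF(2)[of 1] VF(2)[of 2] by simp_all
  define \<delta> where "\<delta> = root 3 (3 * (x2 - x1) / 4)"
  have \<delta>pos: "\<delta> > 0" using ab unfolding \<delta>_def by (intro real_root_gt_zero) auto
  then have \<delta>0: "\<delta> \<ge> 0" by simp
  define c where "c = clamp \<delta>"
  define k1 where "k1 = mt (\<lambda>s. (-2) * (clamp \<delta> s)^1) (lift (U 1)) + mt (\<lambda>s. (-2) * (clamp \<delta> s)^2) (lift (V 1))"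
  define k1' where "k1' = mt (\<lambda>s. (-2) * (clamp \<delta> s)^1) (lift (U 2)) + mt (\<lambda>s. (-2) * (clamp \<delta> s)^2) (lift (V 2))"
  define k2 where "k2 = mt (\<lambda>s. 2 * (clamp \<delta> s)^1) (lift (U 1)) + mt (\<lambda>s. (-2) * (clamp \<delta> s)^2) (lift (V 1))"
  define k2' where "k2' = mt (\<lambda>s. 2 * (clamp \<delta> s)^1) (lift (U 2)) + mt (\<lambda>s. (-2) * (clamp \<delta> s)^2) (lift (V 2))"
  have hU1: "hasdx (lift (U 1)) (lift (U 2))" by (rule hasdx_lift[OF dU(2) dU(3) BU3 BU1 BU2])
  have hV1: "hasdx (lift (V 1)) (lift (V 2))" by (rule hasdx_lift[OF dV(1) dV(2) BV3 BV1 BV2])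
  have hU0: "hasdx (lift (U 0)) (lift (U 1))" by (rule hasdx_lift[OF dU(1) dU(2) BU2 BU0 BU1])
  have hk1: "hasdx k1 k1'" unfolding k1_def k1'_def by (intro hasdx_add hasdx_mt_powc \<delta>0 hU1 hV1)
  have hk2: "hasdx k2 k2'" unfolding k2_def k2'_def by (intro hasdx_add hasdx_mt_powc \<delta>0 hU1 hV1)
  define w where "w = Sol (k1, k2)"
  define w' where "w' = Sol (k1', k2')"
  have hw1: "hasdx (fst w) (fst w')" unfolding w_def w'_def by (rule Sol_hasdx(1)) (use hk1 hk2 in simp_all)
  have hw2: "hasdx (snd w) (snd w')" unfolding w_def w'_def by (rule Sol_hasdx(2)) (use hk1 hk2 in simp_all)
  define gR where "gR = (1/2) *\<^sub>R (fst w - snd w) + k1"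
  define gS where "gS = (1/2) *\<^sub>R (snd w - fst w) + k2"
  have wR: "fst w = Kc 1 gR" using Sol_components(1)[of "(k1,k2)"] by (simp add: w_def gR_def)
  have wS: "snd w = Kc (-1) gS" using Sol_components(2)[of "(k1,k2)"] by (simp add: w_def gS_def)
  define kW where "kW = mt (\<lambda>s. 1 * (clamp \<delta> s)^2) (fst w) + lift (U 0)"
  define kW' where "kW' = mt (\<lambda>s. 1 * (clamp \<delta> s)^2) (fst w') + lift (U 1)"
  have hkW: "hasdx kW kW'" unfolding kW_def kW'_def by (intro hasdx_add hasdx_mt_powc \<delta>0 hw1 hU0)
  define gW where "gW = (-2) *\<^sub>R kW"
  have hgW: "hasdx (Kc (-1) gW) (Kc (-1) ((-2) *\<^sub>R kW'))" unfolding gW_def by (intro Kc_hasdx hasdx_scale hkW)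
  have C1R: "C1_on_region (UNIV \<times> {0..\<delta>}) (\<lambda>x t. t^2 * apply_bcontfun (Kc 1 gR) (x,t)) (\<lambda>x t. t^2 * apply_bcontfun (fst w') (x,t))
           (\<lambda>x t. t * apply_bcontfun gR (x,t) - 2*1*t^2 * (t^2 * apply_bcontfun (fst w') (x,t)))"
    by (rule char_C1[OF \<delta>pos]) (use hasdx_deriv[OF hw1] in \<open>simp add: wR\<close>)
  have C1S: "C1_on_region (UNIV \<times> {0..\<delta>}) (\<lambda>x t. t^2 * apply_bcontfun (Kc (-1) gS) (x,t)) (\<lambda>x t. t^2 * apply_bcontfun (snd w') (x,t))
           (\<lambda>x t. t * apply_bcontfun gS (x,t) - 2*(-1)*t^2 * (t^2 * apply_bcontfun (snd w') (x,t)))"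
    by (rule char_C1[OF \<delta>pos]) (use hasdx_deriv[OF hw2] in \<open>simp add: wS\<close>)
  have C1W: "C1_on_region (UNIV \<times> {0..\<delta>}) (\<lambda>x t. t^2 * apply_bcontfun (Kc (-1) gW) (x,t)) (\<lambda>x t. t^2 * apply_bcontfun (Kc (-1) ((-2) *\<^sub>R kW')) (x,t))
           (\<lambda>x t. t * apply_bcontfun gW (x,t) - 2*(-1)*t^2 * (t^2 * apply_bcontfun (Kc (-1) ((-2) *\<^sub>R kW')) (x,t)))"
    by (rule char_C1[OF \<delta>pos]) (use hasdx_deriv[OF hgW] in simp)
  have \<delta>le: "\<delta> \<le> root 3 (3 * (x2 - x1) / 4)" by (simp add: \<delta>_def)
  have reg: "region_D x1 x2 \<delta> \<subseteq> UNIV \<times> {0..\<delta>}" by (auto simp: region_D_def)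
  have regx: "x \<in> {x1..x2} \<and> t \<in> {0..\<delta>}" if "(x,t) \<in> region_D x1 x2 \<delta>" for x t
  proof -
    have t: "0 \<le> t" "t \<le> \<delta>" and x: "x1 + 2/3 * t^3 \<le> x" "x \<le> x2 - 2/3 * t^3" using that by (auto simp: region_D_def)
    have "0 \<le> t^3" using t by simp
    then have "x1 \<le> x" "x \<le> x2" using x by linarith+
    then show ?thesis using t by auto
  qed
  define R where "R = (\<lambda>x t. t^2 * apply_bcontfun (Kc 1 gR) (x,t))"
  define Rx where "Rx = (\<lambda>x t. t^2 * apply_bcontfun (fst w') (x,t))"
  define Rt where "Rt = (\<lambda>x t. t * apply_bcontfun gR (x,t) - 2*1*t^2 * (t^2 * apply_bcontfun (fst w') (x,t)))"
  define S where "S = (\<lambda>x t. t^2 * apply_bcontfun (Kc (-1) gS) (x,t))"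
  define Sx where "Sx = (\<lambda>x t. t^2 * apply_bcontfun (snd w') (x,t))"
  define St where "St = (\<lambda>x t. t * apply_bcontfun gS (x,t) - 2*(-1)*t^2 * (t^2 * apply_bcontfun (snd w') (x,t)))"
  define W where "W = (\<lambda>x t. t^2 * apply_bcontfun (Kc (-1) gW) (x,t))"
  define Wx where "Wx = (\<lambda>x t. t^2 * apply_bcontfun (Kc (-1) ((-2) *\<^sub>R kW')) (x,t))"
  define Wt where "Wt = (\<lambda>x t. t * apply_bcontfun gW (x,t) - 2*(-1)*t^2 * (t^2 * apply_bcontfun (Kc (-1) ((-2) *\<^sub>R kW')) (x,t)))"
  have c1: "C1_on_region (region_D x1 x2 \<delta>) R Rx Rt" unfolding R_def Rx_def Rt_def by (rule C1_mono[OF C1R reg])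
  have c2: "C1_on_region (region_D x1 x2 \<delta>) S Sx St" unfolding S_def Sx_def St_def by (rule C1_mono[OF C1S reg])
  have c3: "C1_on_region (region_D x1 x2 \<delta>) W Wx Wt" unfolding W_def Wx_def Wt_def by (rule C1_mono[OF C1W reg])
  have vals: "apply_bcontfun k1 (x,t) = -2 * t * u1 1 x - 2 * t^2 * u0 2 x"
      "apply_bcontfun k2 (x,t) = 2 * t * u1 1 x - 2 * t^2 * u0 2 x"
      "apply_bcontfun kW (x,t) = t^2 * apply_bcontfun (fst w) (x,t) + u1 0 x"
    if "x \<in> {x1..x2}" "t \<in> {0..\<delta>}" for x t
  proof -
    have ct: "clamp \<delta> t = t" using that by (simp add: clamp_id)
    have u: "U 0 x = u1 0 x" "U (Suc 0) x = u1 (Suc 0) x" "V (Suc 0) x = u0 2 x"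
      using UF(4)[OF that(1), of 0] UF(4)[OF that(1), of "Suc 0"] VF(4)[OF that(1), of "Suc 0"] by (simp_all add: numeral_2_eq_2)
    show "apply_bcontfun k1 (x,t) = -2 * t * u1 1 x - 2 * t^2 * u0 2 x"
      unfolding k1_def plus_bcontfun.rep_eq mt_powc_apply[OF \<delta>0] lift_apply[OF cU(2) BU1] lift_apply[OF cV(1) BV1] by (simp add: ct u)
    show "apply_bcontfun k2 (x,t) = 2 * t * u1 1 x - 2 * t^2 * u0 2 x"
      unfolding k2_def plus_bcontfun.rep_eq mt_powc_apply[OF \<delta>0] lift_apply[OF cU(2) BU1] lift_apply[OF cV(1) BV1] by (simp add: ct u)
    show "apply_bcontfun kW (x,t) = t^2 * apply_bcontfun (fst w) (x,t) + u1 0 x"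
      unfolding kW_def plus_bcontfun.rep_eq mt_powc_apply[OF \<delta>0] lift_apply[OF cU(1) BU0] by (simp add: ct u)
  qed
  have eqs: "Rt x t + 2*t^2 * Rx x t = (R x t - S x t) / (2*t) - 2*t^2 * (u1 1 x + u0 2 x * t) \<and>
           St x t - 2*t^2 * Sx x t = (S x t - R x t) / (2*t) + 2*t^2 * (u1 1 x - u0 2 x * t) \<and>
           Wt x t - 2*t^2 * Wx x t = - 2*t * (R x t + u1 0 x)"
    if "(x,t) \<in> region_D x1 x2 \<delta>" "t > 0" for x t
  proof -
    have xt: "x \<in> {x1..x2}" "t \<in> {0..\<delta>}" using regx[OF that(1)] by auto
    have Rv: "R x t = t^2 * apply_bcontfun (fst w) (x,t)" unfolding R_def wR ..
    have Sv: "S x t = t^2 * apply_bcontfun (snd w) (x,t)" unfolding S_def wS ..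
    have gRv: "apply_bcontfun gR (x,t) = (1/2) * (apply_bcontfun (fst w) (x,t) - apply_bcontfun (snd w) (x,t)) + apply_bcontfun k1 (x,t)"
      unfolding gR_def by simp
    have gSv: "apply_bcontfun gS (x,t) = (1/2) * (apply_bcontfun (snd w) (x,t) - apply_bcontfun (fst w) (x,t)) + apply_bcontfun k2 (x,t)"
      unfolding gS_def by simp
    have gWv: "apply_bcontfun gW (x,t) = -2 * apply_bcontfun kW (x,t)"
      unfolding gW_def by simp
    have e1: "Rt x t + 2*t^2 * Rx x t = t * apply_bcontfun gR (x,t)" unfolding Rt_def Rx_def by simp
    have e2: "St x t - 2*t^2 * Sx x t = t * apply_bcontfun gS (x,t)" unfolding St_def Sx_def by simp
    have e3: "Wt x t - 2*t^2 * Wx x t = t * apply_bcontfun gW (x,t)" unfolding Wt_def Wx_def by simp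
    show ?thesis
      unfolding e1 e2 e3 Rv Sv gRv gSv gWv vals[OF xt] using that(2)
      by (simp add: field_simps power2_eq_square)
  qed
  have init: "R x 0 = 0 \<and> S x 0 = 0 \<and> W x 0 = 0 \<and> Rt x 0 = 0 \<and> St x 0 = 0 \<and> Wt x 0 = 0" for x
    unfolding R_def S_def W_def Rt_def St_def Wt_def by simp
  show ?thesis
    apply (rule exI[of _ \<delta>])
    apply (intro conjI \<delta>pos \<delta>le)
    apply (rule exI[of _ R], rule exI[of _ Rx], rule exI[of _ Rt])
    apply (rule exI[of _ S], rule exI[of _ Sx], rule exI[of _ St])
    apply (rule exI[of _ W], rule exI[of _ Wx], rule exI[of _ Wt])
    using c1 c2 c3 eqs init by blast
qed


end
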